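(* With $\mathcal I$, $\nu$, $L$, $V_L^*$, $q_{L-1}$, $V_{L-1}^*$ and $\xi$ as defined in the context, for every $\mathbf m\in\mathbb R^{\mathcal I}$ and $a\in\mathcal I$, $$q_{L-1}(\mathbf m,a)=\frac{\xi(a;\mathbf m)}{\sum_{l\in\mathcal I}e^{m[l]}},$$ and consequently $$V_{L-1}^*(\mathbf m)=\frac{1}{\sum_{l\in\mathcal I}e^{m[l]}}\Big[e^{m[x_{[1]}]}+h(\nu)\exp\Big\{\frac{m[x_{[2]}]-\nu m[x_{[1]}]}{1-\nu}\Big\}\Big],$$ where $m[x_{[1]}]\ge m[x_{[2]}]$ are the largest and second-largest entries of $\mathbf m$ (counted with multiplicity).
   Context: $\mathcal I$ is a finite set with $|\mathcal I|\ge2$, $\nu\in(0,1)$, $J(y)=(1-\nu)y+\ln\nu$. $V_L^*(\mathbf m)=\max_{a\in\mathcal I}e^{m[a]}/\sum_{l}e^{m[l]}$; $q_{L-1}(\mathbf m,a)=\int_0^\infty V_L^*(\mathbf m+J(y)\boldsymbol\delta[a])\,f(y\mid\mathbf m,a)\,dy$ with $\boldsymbol\delta[a]$ the indicator vector of $a$ and $f(y\mid\mathbf m,a)=p_a\nu e^{-\nu y}+(1-p_a)e^{-y}$, $p_a=e^{m[a]}/\sum_l e^{m[l]}$; $V_{L-1}^*(\mathbf m)=\max_a q_{L-1}(\mathbf m,a)$. With $M_a=\max_{\hat a\neq a}m[\hat a]$: $\xi(a;\mathbf m)=e^{m[a]}$ if $M_a-m[a]<\ln\nu$, and otherwise $\xi(a;\mathbf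 m)=e^{M_a}+h(\nu)\exp\{\frac{m[a]-\nu M_a}{1-\nu}\}$, where $h(\nu)=\exp\{\frac{\nu\ln\nu}{1-\nu}\}-\exp\{\frac{\ln\nu}{1-\nu}\}$. *)

theory Defs
  imports "HOL-Analysis.Analysis"
begin

definition Jfun :: "real \<Rightarrow> real \<Rightarrow> real" where
  "Jfun \<nu> y = (1 - \<nu>) * y + ln \<nu>"

definition hfun :: "real \<Rightarrow> real" where
  "hfun \<nu> = exp (\<nu> * ln \<nu> / (1 - \<nu>)) - exp (ln \<nu> / (1 - \<nu>))"

definition softmax :: "('i::finite \<Rightarrow> real) \<Rightarrow> 'i \<Rightarrow> real" where
  "softmax m a = exp (m a) / (\<Sum>l\<in>UNIV. exp (m l))"

definition VL :: "('i::finite \<Rightarrow> real) \<Rightarrow> real" where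
  "VL m = Max (range (\<lambda>a. softmax m a))"

definition delta :: "'i \<Rightarrow> 'i \<Rightarrow> real" where
  "delta a = (\<lambda>l. if l = a then 1 else 0)"

definition fdens :: "real \<Rightarrow> ('i::finite \<Rightarrow> real) \<Rightarrow> 'i \<Rightarrow> real \<Rightarrow> real" where
  "fdens \<nu> m a y = softmax m a * \<nu> * exp (- \<nu> * y) + (1 - softmax m a) * exp (- y)"

definition qLm1 :: "real \<Rightarrow> ('i::finite \<Rightarrow> real) \<Rightarrow> 'i \<Rightarrow> real" where
  "qLm1 \<nu> m a = (LINT y:{0..}|lborel. VL (\<lambda>l. m l + Jfun \<nu> y * delta a l) * fdens \<nu> m a y)"

definition VLm1 :: "real \<Rightarrow> ('i::finite \<Rightarrow> real) \<Rightarrow> real" where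
  "VLm1 \<nu> m = Max (range (\<lambda>a. qLm1 \<nu> m a))"

definition Mother :: "('i::finite \<Rightarrow> real) \<Rightarrow> 'i \<Rightarrow> real" where
  "Mother m a = Max (m ` (UNIV - {a}))"

definition xi :: "real \<Rightarrow> ('i::finite \<Rightarrow> real) \<Rightarrow> 'i \<Rightarrow> real" where
  "xi \<nu> m a = (if Mother m a - m a < ln \<nu> then exp (m a)
     else exp (Mother m a) + hfun \<nu> * exp ((m a - \<nu> * Mother m a) / (1 - \<nu>)))"

end

theory Submission
  imports Defs
begin

lemma hfun_nonneg: assumes "0<\<nu>" "\<nu><1" shows "0 \<le> hfun \<nu>"
proof -
  have "ln \<nu> < 0" using assms by simp
  hence "ln \<nu> / (1 - \<nu>) \<le> \<nu> * ln \<nu> / (1 - \<nu>)" using assms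
    by (intro divide_right_mono) (auto simp: mult_le_cancel_right1 mult_less_cancel_right)
  thus ?thesis unfolding hfun_def by simp
qed

lemma key_ineq:
  assumes nu: "0<\<nu>" "\<nu><1" and d: "0 \<le> d" "d \<le> - ln \<nu>"
  shows "1 + hfun \<nu> * exp (d/(1-\<nu>)) \<le> exp d + hfun \<nu> * exp (-\<nu>*d/(1-\<nu>))"
proof -
  define k where "k = 1/(1-\<nu>)"
  have k1: "k > 1" using nu by (simp add: k_def)
  define h where "h = hfun \<nu>"
  have h0: "h \<ge> 0" using hfun_nonneg nu h_def by simp
  define g where "g r = h * (r powr k - r powr (1-k)) - r + 1" for r::real
  have conv: "convex_on {1..1/\<nu>} g"
  proof (rule f''_ge0_imp_convex[where f'="\<lambda>r. h * (k * r powr (k-1) - (1-k) * r powr (1-k-1)) - 1"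
        and f''="\<lambda>r. h * (k * ((k-1) * r powr (k-1-1)) - (1-k) * ((1-k-1) * r powr (1-k-1-1)))"])
    show "convex {1..1/\<nu>}" by simp
    fix r assume r: "r \<in> {1..1/\<nu>}"
    hence rp: "r > 0" by auto
    show "(g has_real_derivative h * (k * r powr (k-1) - (1-k) * r powr (1-k-1)) - 1) (at r)"
      unfolding g_def using rp by (auto intro!: derivative_eq_intros)
    show "((\<lambda>r. h * (k * r powr (k-1) - (1-k) * r powr (1-k-1)) - 1) has_real_derivative
       h * (k * ((k-1) * r powr (k-1-1)) - (1-k) * ((1-k-1) * r powr (1-k-1-1)))) (at r)"
      using rp by (auto intro!: derivative_eq_intros)
    have "r powr (1-k-1-1) \<le> r powr (k-1-1)" using r k1 by (intro powr_mono) auto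
    hence "0 \<le> k * (k-1) * (r powr (k-1-1) - r powr (1-k-1-1))" using k1 by simp
    also have "k * (k-1) * (r powr (k-1-1) - r powr (1-k-1-1)) = 
       (k * ((k-1) * r powr (k-1-1)) - (1-k) * ((1-k-1) * r powr (1-k-1-1)))"
      by (simp add: algebra_simps)
    finally show "0 \<le> h * (k * ((k-1) * r powr (k-1-1)) - (1-k) * ((1-k-1) * r powr (1-k-1-1)))"
      using h0 by simp
  qed
  have g1: "g 1 = 0" by (simp add: g_def)
  have lnv: "ln \<nu> < 0" using nu by simp
  have e1: "exp (\<nu> * ln \<nu> / (1 - \<nu>)) = \<nu> powr (\<nu>*k)" using nu by (simp add: powr_def k_def)
  have e2: "exp (ln \<nu> / (1 - \<nu>)) = \<nu> powr k" using nu by (simp add: powr_def k_def)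
  have hdef: "h = \<nu> powr (\<nu>*k) - \<nu> powr k" using e1 e2 by (simp add: h_def hfun_def)
  have "(1/\<nu>) powr k = \<nu> powr (-k)" using nu by (simp add: powr_minus_divide powr_divide)
  have gnu: "g (1/\<nu>) \<le> 0"
  proof -
    have a: "(1/\<nu>) powr k = \<nu> powr (-k)" using nu by (simp add: powr_divide powr_minus_divide)
    have b: "(1/\<nu>) powr (1-k) = \<nu> powr (k-1)" using nu by (simp add: powr_divide) (metis minus_diff_eq powr_minus_divide)
    have c: "\<nu> powr (\<nu>*k) * \<nu> powr (-k) = 1/\<nu>"
    proof -
      have "(\<nu> - 1) * k = -1" using nu by (simp add: k_def divide_simps)
      hence "\<nu>*k + (-k) = -1" by (simp add: algebra_simps)
      have "\<nu> powr (\<nu>*k) * \<nu> powr (-k) = \<nu> powr (\<nu>*k + -k)" by (rule powr_add[symmetric])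
      also have "\<dots> = \<nu> powr (-1)" using \<open>\<nu>*k + (-k) = -1\<close> by simp
      also have "\<dots> = 1/\<nu>" using nu by (simp add: powr_minus_divide)
      finally show ?thesis .
    qed
    have d': "\<nu> powr k * \<nu> powr (-k) = 1" using nu by (simp flip: powr_add)
    have "g (1/\<nu>) = h * \<nu> powr (-k) - h * \<nu> powr (k-1) - 1/\<nu> + 1"
      unfolding g_def a b by (simp add: algebra_simps)
    also have "h * \<nu> powr (-k) = 1/\<nu> - 1" unfolding hdef using c d' by (simp add: algebra_simps)
    finally have "g (1/\<nu>) = - (h * \<nu> powr (k-1))" by simp
    thus ?thesis using h0 by simp
  qed
  define r where "r = exp d"
  have r1: "1 \<le> r" using d by (simp add: r_def)
  have r2: "r \<le> 1/\<nu>" using d nu unfolding r_def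
    by (metis exp_le_cancel_iff exp_ln exp_minus inverse_eq_divide)
  define t where "t = (r - 1) / (1/\<nu> - 1)"
  have nu1: "1/\<nu> - 1 > 0" using nu by simp
  have t0: "0 \<le> t" "t \<le> 1" using r1 r2 nu1 by (auto simp: t_def)
  have ne: "1/\<nu> - 1 \<noteq> 0" using nu1 by linarith
  have rt0: "t*(1/\<nu> - 1) = r - 1" unfolding t_def using ne by (metis nonzero_eq_divide_eq)
  have rt: "r = (1 - t) *\<^sub>R 1 + t *\<^sub>R (1/\<nu>)" using rt0 by (simp add: algebra_simps)
  have "g r \<le> (1-t) * g 1 + t * g (1/\<nu>)"
    unfolding rt using convex_onD_Icc[OF conv _ t0] nu by simp
  also have "\<dots> \<le> 0" using g1 gnu t0 by (simp add: mult_nonneg_nonpos)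
  finally have gr: "g r \<le> 0" .
  have p1: "r powr k = exp (d/(1-\<nu>))" using r1 by (simp add: powr_def r_def k_def)
  have p2: "r powr (1-k) = exp (-\<nu>*d/(1-\<nu>))"
  proof -
    have "(1-k) * d = -\<nu>*d/(1-\<nu>)" using nu by (simp add: k_def field_simps)
    thus ?thesis using r1 by (simp add: powr_def r_def mult.commute)
  qed
  have "h * (exp (d/(1-\<nu>)) - exp (-\<nu>*d/(1-\<nu>))) - r + 1 \<le> 0" using gr unfolding g_def p1 p2 .
  thus ?thesis unfolding h_def r_def by (simp add: algebra_simps)
qed

lemma exp_tail:
  fixes u c \<nu> :: real
  assumes "0 < \<nu>"
  shows "((\<lambda>y. \<nu> * exp (u - \<nu>*y)) has_integral exp (u - \<nu>*c)) {c..}"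
proof -
  have "((\<lambda>y. (\<nu> * exp u) * exp (-\<nu>*y)) has_integral (\<nu> * exp u) * (exp (-\<nu>*c)/\<nu>)) {c..}"
    by (intro has_integral_mult_right has_integral_exp_minus_to_infinity assms)
  moreover have "(\<nu> * exp u) * (exp (-\<nu>*c)/\<nu>) = exp (u - \<nu>*c)" using assms
    by (simp add: exp_diff exp_minus field_simps)
  moreover have "\<And>y. (\<nu> * exp u) * exp (-\<nu>*y) = \<nu> * exp (u - \<nu>*y)"
    by (simp add: exp_diff exp_minus field_simps)
  ultimately show ?thesis by (metis (no_types, lifting) has_integral_eq)
qed

lemma integral_max:
  fixes u w \<nu> :: real
  assumes nu: "0<\<nu>" "\<nu><1"
  shows "((\<lambda>y. max (\<nu> * exp (u - \<nu>*y)) (exp (w - y))) has_integral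
     (if w - u < ln \<nu> then exp u else exp w + hfun \<nu> * exp ((u - \<nu>*w)/(1-\<nu>)))) {0..}"
proof (cases "w - u < ln \<nu>")
  case True
  have eq1: "\<nu> * exp (u - \<nu>*y) = max (\<nu> * exp (u - \<nu>*y)) (exp (w - y))" if "y \<in> {0..}" for y
  proof -
    have "\<nu> * y \<le> y" using nu that by (simp add: mult_left_le_one_le)
    hence "w - y \<le> ln \<nu> + (u - \<nu>*y)" using True by linarith
    hence "exp (w - y) \<le> exp (ln \<nu> + (u - \<nu>*y))" by simp
    also have "\<dots> = \<nu> * exp (u - \<nu>*y)" using nu by (simp add: exp_add)
    finally show ?thesis by simp
  qed
  moreover have "((\<lambda>y. \<nu> * exp (u - \<nu>*y)) has_integral exp u) {0..}"
    using exp_tail[OF nu(1), of u 0] by simp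
  ultimately have "((\<lambda>y. max (\<nu> * exp (u - \<nu>*y)) (exp (w - y))) has_integral exp u) {0..}"
    by (rule has_integral_eq)
  thus ?thesis using True by simp
next
  case False
  define y0 where "y0 = (w - u - ln \<nu>)/(1-\<nu>)"
  have y00: "y0 \<ge> 0" using False nu by (simp add: y0_def)
  have cmp: "\<nu> * exp (u - \<nu>*y) \<le> exp (w - y) \<longleftrightarrow> y \<le> y0" for y
  proof -
    have "\<nu> * exp (u - \<nu>*y) = exp (ln \<nu> + (u - \<nu>*y))" using nu by (simp add: exp_add)
    hence "\<nu> * exp (u - \<nu>*y) \<le> exp (w - y) \<longleftrightarrow> ln \<nu> + (u - \<nu>*y) \<le> w - y" by simp
    also have "\<dots> \<longleftrightarrow> (1-\<nu>) * y \<le> w - u - ln \<nu>" by (simp add: algebra_simps)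
    also have "\<dots> \<longleftrightarrow> y \<le> y0" using nu unfolding y0_def by (simp add: pos_le_divide_eq mult.commute)
    finally show ?thesis .
  qed
  have I1: "((\<lambda>y. max (\<nu> * exp (u - \<nu>*y)) (exp (w - y))) has_integral (exp w - exp (w - y0))) {0..y0}"
  proof -
    have F: "((\<lambda>y. exp (w - y)) has_integral ((- exp (w - y0)) - (- exp (w - 0)))) {0..y0}"
      using y00 by (intro fundamental_theorem_of_calculus)
         (auto intro!: derivative_eq_intros simp flip: has_real_derivative_iff_has_vector_derivative)
    have E: "exp (w - y) = max (\<nu> * exp (u - \<nu>*y)) (exp (w - y))" if "y \<in> {0..y0}" for y
      using cmp[of y] that by (auto simp: max_def)
    show ?thesis using has_integral_eq[OF E F] by simp
  qed
  have I2: "((\<lambda>y. max (\<nu> * exp (u - \<nu>*y)) (exp (w - y))) has_integral exp (u - \<nu>*y0)) {y0..}"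
  proof -
    have eq2: "\<nu> * exp (u - \<nu>*y) = max (\<nu> * exp (u - \<nu>*y)) (exp (w - y))" if "y \<in> {y0..}" for y
    proof (cases "y = y0")
      case True
      have "ln \<nu> + (u - \<nu>*y0) = w - y0" using nu unfolding y0_def by (simp add: field_simps)
      hence "\<nu> * exp (u - \<nu>*y0) = exp (w - y0)" using nu by (metis exp_add exp_ln)
      thus ?thesis using True by simp
    next
      case False thus ?thesis using cmp[of y] that by (auto simp: max_def)
    qed
    thus ?thesis using has_integral_eq[OF eq2 exp_tail[OF nu(1), of u y0]] by simp
  qed
  have "((\<lambda>y. max (\<nu> * exp (u - \<nu>*y)) (exp (w - y))) has_integral (exp w - exp (w - y0) + exp (u - \<nu>*y0))) ({0..y0} \<union> {y0..})"
    by (rule has_integral_Un[OF I1 I2]) (auto intro: negligible_subset[of "{y0}"])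
  moreover have "{0..y0} \<union> {y0..} = {0::real..}" using y00 by auto
  moreover have "exp w - exp (w - y0) + exp (u - \<nu>*y0) = exp w + hfun \<nu> * exp ((u - \<nu>*w)/(1-\<nu>))"
  proof -
    have ne: "1 - \<nu> \<noteq> 0" using nu by simp
    have y0eq: "(1-\<nu>)*y0 = w - u - ln \<nu>" using ne by (simp add: y0_def)
    have a0: "(w - y0)*(1-\<nu>) = u - \<nu>*w + ln \<nu>" using y0eq by (simp add: algebra_simps)
    have b0: "(u - \<nu>*y0)*(1-\<nu>) = u - \<nu>*w + \<nu>*ln \<nu>"
    proof -
      have "(u - \<nu>*y0)*(1-\<nu>) = u*(1-\<nu>) - \<nu>*((1-\<nu>)*y0)" by (simp add: algebra_simps)
      also have "\<dots> = u - \<nu>*w + \<nu>*ln \<nu>" unfolding y0eq by (simp add: algebra_simps)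
      finally show ?thesis .
    qed
    have a: "w - y0 = (u - \<nu>*w)/(1-\<nu>) + ln \<nu>/(1-\<nu>)"
      using a0 ne by (simp add: add_divide_distrib[symmetric] eq_divide_eq)
    have b: "u - \<nu>*y0 = (u - \<nu>*w)/(1-\<nu>) + \<nu>*ln \<nu>/(1-\<nu>)"
      using b0 ne by (simp add: add_divide_distrib[symmetric] eq_divide_eq)
    show ?thesis unfolding a b hfun_def exp_add by (simp add: algebra_simps)
  qed
  ultimately show ?thesis using False by simp
qed


lemma lint_from_has_integral:
  fixes f :: "real \<Rightarrow> real"
  assumes c: "continuous_on UNIV f" and nn: "\<And>x. x \<in> A \<Longrightarrow> 0 \<le> f x"
    and I: "(f has_integral I) A" and A: "A \<in> sets borel"
  shows "(LINT x:A|lborel. f x) = I"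
proof -
  have "f absolutely_integrable_on A"
    by (rule nonnegative_absolutely_integrable_1) (use I nn in \<open>auto simp: has_integral_integrable\<close>)
  hence "integrable lebesgue (\<lambda>x. indicator A x *\<^sub>R f x)" by (simp add: set_integrable_def)
  moreover have "(\<lambda>x. indicator A x *\<^sub>R f x) \<in> borel_measurable lborel"
    using borel_measurable_continuous_onI[OF c] A by measurable
  ultimately have "integrable lborel (\<lambda>x. indicator A x *\<^sub>R f x)"
    using integrable_completion by blast
  hence si: "set_integrable lborel A f" by (simp add: set_integrable_def)
  show ?thesis using set_borel_integral_eq_integral(2)[OF si] I by (simp add: integral_unique)
qed

lemma Max_range_split:
  fixes F :: "'i::finite \<Rightarrow> real"
  assumes "UNIV - {a} \<noteq> {}"
  shows "Max (range F) = max (F a) (Max (F ` (UNIV - {a})))"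
proof -
  have "range F = insert (F a) (F ` (UNIV - {a}))" by auto
  thus ?thesis using assms by simp
qed

lemma pointwise:
  fixes \<nu> :: real and m :: "'i::finite \<Rightarrow> real"
  assumes ne: "UNIV - {a} \<noteq> {}" and nu: "0 < \<nu>" "\<nu> < 1"
  shows "VL (\<lambda>l. m l + Jfun \<nu> y * delta a l) * fdens \<nu> m a y =
    max (\<nu> * exp (m a - \<nu>*y)) (exp (Mother m a - y)) / (\<Sum>l\<in>UNIV. exp (m l))"
proof -
  define m' where "m' = (\<lambda>l. m l + Jfun \<nu> y * delta a l)"
  define S where "S = (\<Sum>l\<in>UNIV. exp (m l))"
  define S' where "S' = (\<Sum>l\<in>UNIV. exp (m' l))"
  define A where "A = exp (m a)"
  define B where "B = (\<Sum>l\<in>UNIV - {a}. exp (m l))"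
  define E where "E = exp (Mother m a)"
  define t where "t = \<nu> * A * exp ((1-\<nu>)*y)"
  have m'o: "m' l = m l" if "l \<noteq> a" for l using that by (simp add: m'_def delta_def)
  have "m' a = ln \<nu> + (m a + (1-\<nu>)*y)" by (simp add: m'_def delta_def Jfun_def)
  hence "exp (m' a) = exp (ln \<nu>) * (exp (m a) * exp ((1-\<nu>)*y))" by (simp only: exp_add)
  hence m'a: "exp (m' a) = t" using nu by (simp add: t_def A_def)
  have SA: "S = A + B" unfolding S_def A_def B_def by (rule sum.remove) auto
  have S'a: "S' = t + B"
  proof -
    have "S' = exp (m' a) + (\<Sum>l\<in>UNIV - {a}. exp (m' l))" unfolding S'_def
      by (rule sum.remove) auto
    also have "(\<Sum>l\<in>UNIV - {a}. exp (m' l)) = B" unfolding B_def by (rule sum.cong) (auto simp: m'o)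
    finally show ?thesis using m'a by simp
  qed
  have Bp: "B > 0" unfolding B_def using ne by (intro sum_pos) auto
  have tp: "t > 0" using nu by (simp add: t_def A_def)
  have Sp: "S > 0" using SA Bp by (simp add: A_def add_pos_pos)
  have S'p: "S' > 0" using S'a Bp tp by simp
  have img: "(\<lambda>l. exp (m' l) / S') ` (UNIV - {a}) = (\<lambda>x. exp x / S') ` (m ` (UNIV - {a}))"
    by (auto simp: m'o image_iff)
  have mono: "mono (\<lambda>x. exp x / S')" using S'p by (auto intro!: monoI divide_right_mono)
  have "VL m' = max (exp (m' a) / S') (Max ((\<lambda>l. exp (m' l) / S') ` (UNIV - {a})))"
    unfolding VL_def softmax_def S'_def[symmetric] by (rule Max_range_split[OF ne])
  also have "Max ((\<lambda>l. exp (m' l) / S') ` (UNIV - {a})) = E / S'"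
    unfolding img E_def Mother_def using ne by (subst mono_Max_commute[OF mono, symmetric]) auto
  finally have VLe: "VL m' = max t E / S'" using m'a S'p by (simp add: max_def divide_le_cancel)
  have fd: "fdens \<nu> m a y = exp (-y) * (t + B) / S"
  proof -
    have sm: "softmax m a = A / S" by (simp add: softmax_def A_def S_def)
    have e1: "1 - A / S = B / S" using SA Sp by (simp add: field_simps)
    have e2: "A * \<nu> * exp (-\<nu>*y) = exp (-y) * t"
      by (simp add: t_def algebra_simps flip: exp_add)
    have "fdens \<nu> m a y = (A * \<nu> * exp (-\<nu>*y)) / S + (B / S) * exp (-y)"
      unfolding fdens_def sm e1 by simp
    also have "\<dots> = (exp (-y) * t) / S + (B * exp (-y)) / S" unfolding e2 by simp
    also have "\<dots> = exp (-y) * (t + B) / S" by (simp add: add_divide_distrib algebra_simps)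
    finally show ?thesis .
  qed
  have "VL m' * fdens \<nu> m a y = max t E * exp (-y) / S"
  proof -
    have gen: "\<And>x z P. P \<noteq> (0::real) \<Longrightarrow> x / P * (z * P / S) = x * z / S" by simp
    have "t + B \<noteq> 0" using Bp tp by simp
    thus ?thesis unfolding VLe fd S'a using gen by (simp add: mult.commute)
  qed
  also have "max t E * exp (-y) = max (t * exp (-y)) (E * exp (-y))"
    by (simp add: max_def)
  also have "t * exp (-y) = \<nu> * exp (m a - \<nu>*y)"
    by (simp add: t_def A_def algebra_simps flip: exp_add)
  also have "E * exp (-y) = exp (Mother m a - y)" by (simp add: E_def flip: exp_add)
  finally show ?thesis unfolding m'_def S_def .
qed


lemma part1:
  fixes \<nu> :: real and m :: "'i::finite \<Rightarrow> real"
  assumes ne: "UNIV - {a} \<noteq> {}" and nu: "0 < \<nu>" "\<nu> < 1"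
  shows "qLm1 \<nu> m a = xi \<nu> m a / (\<Sum>l\<in>UNIV. exp (m l))"
proof -
  define S where "S = (\<Sum>l\<in>UNIV. exp (m l))"
  have Sp: "S > 0" unfolding S_def by (intro sum_pos) auto
  define g where "g y = max (\<nu> * exp (m a - \<nu>*y)) (exp (Mother m a - y)) / S" for y
  have "qLm1 \<nu> m a = (LINT y:{0..}|lborel. g y)"
    unfolding qLm1_def g_def S_def using pointwise[OF ne nu, of m]
    by (intro set_lebesgue_integral_cong) auto
  also have "\<dots> = xi \<nu> m a / S"
  proof (rule lint_from_has_integral)
    show "continuous_on UNIV g" unfolding g_def by (intro continuous_intros) (use Sp in auto)
    show "0 \<le> g x" for x unfolding g_def using Sp nu by (auto simp: max_def)
    show "{0::real..} \<in> sets borel" by simp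
    have H: "((\<lambda>y. max (\<nu> * exp (m a - \<nu>*y)) (exp (Mother m a - y))) has_integral xi \<nu> m a) {0..}"
      unfolding xi_def using integral_max[OF nu, of "m a" "Mother m a"] by simp
    show "(g has_integral xi \<nu> m a / S) {0..}"
      using has_integral_mult_left[OF H, of "1/S"] unfolding g_def by simp
  qed
  finally show ?thesis unfolding S_def .
qed

theorem mainTheorem4:
  fixes \<nu> :: real and m :: "'i::finite \<Rightarrow> real"
  assumes "CARD('i) \<ge> 2" and "0 < \<nu>" and "\<nu> < 1"
  shows "(\<forall>a. qLm1 \<nu> m a = xi \<nu> m a / (\<Sum>l\<in>UNIV. exp (m l))) \<and>
         (\<forall>x1 x2. x1 \<noteq> x2 \<longrightarrow> m x1 = Max (range m) \<longrightarrow> m x2 = Max (m ` (UNIV - {x1})) \<longrightarrow>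
            VLm1 \<nu> m = (exp (m x1) + hfun \<nu> * exp ((m x2 - \<nu> * m x1) / (1 - \<nu>)))
                         / (\<Sum>l\<in>UNIV. exp (m l)))"
proof -
  have nu: "0 < \<nu>" "\<nu> < 1" using assms by auto
  have ne: "UNIV - {a} \<noteq> {}" for a :: 'i
  proof
    assume "UNIV - {a} = {}"
    hence "UNIV = {a}" by auto
    hence "CARD('i) = card {a}" by (rule arg_cong)
    hence "CARD('i) = 1" by simp
    thus False using assms(1) by simp
  qed
  have P1: "\<forall>a. qLm1 \<nu> m a = xi \<nu> m a / (\<Sum>l\<in>UNIV. exp (m l))"
    using part1[OF ne nu] by blast
  show ?thesis
  proof (intro conjI P1 allI impI)
    fix x1 x2 :: 'i
    assume x12: "x1 \<noteq> x2" and h1: "m x1 = Max (range m)" and h2: "m x2 = Max (m ` (UNIV - {x1}))"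
    define S where "S = (\<Sum>l\<in>UNIV. exp (m l))"
    have Sp: "S > 0" unfolding S_def by (intro sum_pos) auto
    define F where "F = exp (m x1) + hfun \<nu> * exp ((m x2 - \<nu> * m x1) / (1 - \<nu>))"
    have h0: "0 \<le> hfun \<nu>" using hfun_nonneg nu by simp
    have lnv: "ln \<nu> < 0" using nu by simp
    have le1: "m l \<le> m x1" for l unfolding h1 by simp
    have le2: "m l \<le> m x2" if "l \<noteq> x1" for l unfolding h2 using that by (intro Max_ge) auto
    have Mo: "Mother m a = m x1" if "a \<noteq> x1" for a
      unfolding Mother_def using that le1 by (intro Max_eqI) auto
    have Mo1: "Mother m x1 = m x2" unfolding Mother_def h2 ..
    have nu1: "1 - \<nu> > 0" using nu by simp
    have xi2: "xi \<nu> m x2 = F"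
      unfolding xi_def F_def Mo[OF x12[symmetric]] using le1[of x2] lnv by auto
    have xile: "xi \<nu> m a \<le> F" for a
    proof (cases "a = x1")
      case False
      have "exp ((m a - \<nu> * m x1) / (1 - \<nu>)) \<le> exp ((m x2 - \<nu> * m x1) / (1 - \<nu>))"
        using le2[OF False] nu1 by (simp add: divide_right_mono)
      hence "hfun \<nu> * exp ((m a - \<nu> * m x1) / (1 - \<nu>)) \<le> hfun \<nu> * exp ((m x2 - \<nu> * m x1) / (1 - \<nu>))"
        using h0 by (rule mult_left_mono)
      thus ?thesis unfolding xi_def F_def Mo[OF False] using le1[of a] lnv by auto
    next
      case True
      show ?thesis
      proof (cases "m x2 - m x1 < ln \<nu>")
        case True
        thus ?thesis using h0 unfolding \<open>a = x1\<close> xi_def F_def Mo1 by simp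
      next
        case c2: False
        define d where "d = m x1 - m x2"
        have d0: "0 \<le> d" "d \<le> - ln \<nu>" using le1[of x2] c2 by (auto simp: d_def)
        have K: "1 + hfun \<nu> * exp (d/(1-\<nu>)) \<le> exp d + hfun \<nu> * exp (-\<nu>*d/(1-\<nu>))"
          by (rule key_ineq[OF nu d0])
        have "exp (m x2) * (1 + hfun \<nu> * exp (d/(1-\<nu>))) \<le> exp (m x2) * (exp d + hfun \<nu> * exp (-\<nu>*d/(1-\<nu>)))"
          using K by simp
        hence K2: "exp (m x2) + hfun \<nu> * exp (m x2 + d/(1-\<nu>)) \<le> exp (m x2 + d) + hfun \<nu> * exp (m x2 + -\<nu>*d/(1-\<nu>))"
          unfolding exp_add by (simp add: algebra_simps)
        have nz: "1 - \<nu> \<noteq> 0" using nu1 by simp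
        have e1: "m x2 + d/(1-\<nu>) = (m x1 - \<nu> * m x2) / (1 - \<nu>)"
          unfolding add_divide_eq_iff[OF nz] by (simp add: d_def algebra_simps)
        have e2: "m x2 + -\<nu>*d/(1-\<nu>) = (m x2 - \<nu> * m x1) / (1 - \<nu>)"
          unfolding add_divide_eq_iff[OF nz] by (simp add: d_def algebra_simps)
        have e3: "m x2 + d = m x1" by (simp add: d_def)
        show ?thesis using K2 c2 unfolding \<open>a = x1\<close> xi_def F_def Mo1 e1 e2 e3 by simp
      qed
    qed
    have "VLm1 \<nu> m = Max (range (\<lambda>a. xi \<nu> m a / S))"
      unfolding VLm1_def S_def using P1 by simp
    also have "\<dots> = F / S"
    proof (rule Max_eqI)
      show "finite (range (\<lambda>a. xi \<nu> m a / S))" by simp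
      show "F / S \<in> range (\<lambda>a. xi \<nu> m a / S)" using xi2 by (metis rangeI)
      fix y assume "y \<in> range (\<lambda>a. xi \<nu> m a / S)"
      then obtain a where "y = xi \<nu> m a / S" by auto
      thus "y \<le> F / S" using xile[of a] Sp by (simp add: divide_right_mono)
    qed
    finally show "VLm1 \<nu> m = (exp (m x1) + hfun \<nu> * exp ((m x2 - \<nu> * m x1) / (1 - \<nu>)))
                         / (\<Sum>l\<in>UNIV. exp (m l))" unfolding F_def S_def .
  qed
qed

end
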